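(* Let $h$ be analytic and convex (univalent) in $\mathbb{D}=\{|z|<1\}$ and let $u(z)=h(z)+\frac{1}{2}(1-|z|^{2})\,zh'(z)$. Then $u$ is univalent on the disk $|z|<\sqrt{2}-1$.
   Context: A convex function is an analytic univalent function mapping $\mathbb{D}$ onto a convex domain. *)

theory Defs
  imports "HOL-Complex_Analysis.Complex_Analysis"
begin

definition convex_univalent :: "(complex \<Rightarrow> complex) \<Rightarrow> bool" where
  "convex_univalent h \<longleftrightarrow>
     h holomorphic_on ball 0 1 \<and> inj_on h (ball 0 1) \<and> convex (h ` ball 0 1)"

end

theory Submission
  imports Defs
begin

lemma alg_bound:
  fixes p :: complex and r :: real
  assumes r: "0 \<le> r" "r < 1" and hp: "cmod (p - 1) \<le> r * cmod (p + 1)"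
  shows "cmod (of_real ((1 - r^2)/2) * p - of_real (r^2/2)) \<le> 1/2 + r"
proof -
  obtain x y where p: "p = Complex x y" by (cases p)
  have "(cmod (p - 1))^2 \<le> (r * cmod (p + 1))^2"
    using hp by (intro power_mono) auto
  hence h1: "(x-1)^2 + y^2 \<le> r^2 * ((x+1)^2 + y^2)"
    by (simp add: p cmod_def power_mult_distrib)
  have "cmod (of_real ((1 - r^2)/2) * p - of_real (r^2/2) - 1/2) \<le> r"
  proof -
    have e: "of_real ((1 - r^2)/2) * p - of_real (r^2/2) - 1/2 = Complex ((1-r^2)/2*x - (1+r^2)/2) ((1-r^2)/2*y)"
      by (simp add: p complex_eq_iff field_simps)
    have "((1-r^2)/2*x - (1+r^2)/2)^2 + ((1-r^2)/2*y)^2 \<le> r^2"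
    proof -
      have "((1-r^2)/2*x - (1+r^2)/2)^2 + ((1-r^2)/2*y)^2 - r^2
          = (1-r^2)/4 * ((x-1)^2 + y^2 - r^2 * ((x+1)^2 + y^2))"
        by (simp add: power2_eq_square field_simps)
      also have "\<dots> \<le> 0" using h1 r by (intro mult_nonneg_nonpos) (auto simp: power_le_one)
      finally show ?thesis by simp
    qed
    hence "sqrt (((1-r^2)/2*x - (1+r^2)/2)^2 + ((1-r^2)/2*y)^2) \<le> sqrt (r^2)"
      by (rule real_sqrt_le_mono)
    thus ?thesis using r by (subst e, subst complex_norm) simp
  qed
  moreover have "cmod (of_real ((1 - r^2)/2) * p - of_real (r^2/2)) \<le> cmod (of_real ((1 - r^2)/2) * p - of_real (r^2/2) - 1/2) + 1/2"
    using norm_triangle_ineq[of "of_real ((1 - r^2)/2) * p - of_real (r^2/2) - 1/2" "1/2"] by simp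
  ultimately show ?thesis by simp
qed


lemma deriv_ident:
  fixes a b c c' \<Delta> :: complex
  assumes "a \<noteq> 0" "c' = \<Delta> * inverse a"
  shows "c' * a + ((1 - c*cnj c) * (c * (c' * b) + c' * a) + (-(c * cnj c' + c' * cnj c)) * (c * a)) * (1/2) - \<Delta>
     = \<Delta> * (((1 - c*cnj c) * (1 + c * b / a) - c * cnj c) / 2) + (- (c^2 * (a * cnj (inverse a))) / 2) * cnj \<Delta>"
  using assms(1) unfolding assms(2) by (simp add: field_simps power2_eq_square)

lemma norm_a_cnj_inv: "(a::complex) \<noteq> 0 \<Longrightarrow> cmod (a * cnj (inverse a)) = 1"
  by (simp add: norm_mult norm_inverse)


locale cvx =
  fixes h g :: "complex \<Rightarrow> complex"
  assumes hol: "h holomorphic_on ball 0 1" and inj: "inj_on h (ball 0 1)"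
    and cvx: "convex (h ` ball 0 1)"
    and ghol: "g holomorphic_on h ` ball 0 1"
    and gd: "\<And>z. z \<in> ball 0 1 \<Longrightarrow> deriv h z * deriv g (h z) = 1"
    and gh: "\<And>z. z \<in> ball 0 1 \<Longrightarrow> g (h z) = z"
begin

lemma comb_in:
  assumes "a \<in> h ` ball 0 1" "b \<in> h ` ball 0 1" "0 \<le> t" "t \<le> 1"
  shows "(1 - of_real t) * a + of_real t * b \<in> h ` ball 0 1"
proof -
  have "(1 - t) *\<^sub>R a + t *\<^sub>R b \<in> h ` ball 0 1"
    using assms by (intro convexD[OF cvx]) auto
  thus ?thesis by (simp add: scaleR_conv_of_real)
qed

lemma seg_aux:
  assumes "cmod z1 \<le> cmod z2" "cmod z2 < 1" "0 \<le> t" "t \<le> 1"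
  shows "\<exists>\<zeta>. cmod \<zeta> \<le> cmod z2 \<and> h \<zeta> = (1 - of_real t) * h z1 + of_real t * h z2"
proof (cases "z2 = 0")
  case True
  then have "z1 = 0" using assms by simp
  then show ?thesis using True by (intro exI[of _ 0]) (simp add: algebra_simps)
next
  case False
  define c where "c = z1 / z2"
  have c1: "cmod c \<le> 1" using assms False by (simp add: c_def norm_divide divide_le_eq_1)
  define F where "F = (\<lambda>\<xi>. (1 - of_real t) * h (c * \<xi>) + of_real t * h \<xi>)"
  have cb: "c * \<xi> \<in> ball 0 1" if "\<xi> \<in> ball 0 1" for \<xi>
  proof -
    have "cmod (c * \<xi>) \<le> cmod \<xi>" using c1 by (simp add: norm_mult mult_left_le_one_le)
    thus ?thesis using that by simp
  qed
  have Fin: "F \<xi> \<in> h ` ball 0 1" if "\<xi> \<in> ball 0 1" for \<xi>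
    unfolding F_def using that cb assms by (intro comb_in) auto
  have Fhol: "F holomorphic_on ball 0 1"
  proof -
    have "(\<lambda>\<xi>. c * \<xi>) holomorphic_on ball 0 1" by (intro holomorphic_intros)
    then have "(h \<circ> (\<lambda>\<xi>. c * \<xi>)) holomorphic_on ball 0 1"
      by (rule holomorphic_on_compose_gen[OF _ hol]) (use cb in auto)
    then have "(\<lambda>\<xi>. h (c * \<xi>)) holomorphic_on ball 0 1" by (simp add: o_def)
    thus ?thesis unfolding F_def using hol by (intro holomorphic_intros)
  qed
  define \<phi> where "\<phi> = g \<circ> F"
  have phol: "\<phi> holomorphic_on ball 0 1"
    unfolding \<phi>_def using Fin by (intro holomorphic_on_compose_gen[OF Fhol ghol]) auto
  have p0: "\<phi> 0 = 0"
    using gh[of 0] by (simp add: \<phi>_def F_def algebra_simps)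
  have pin: "cmod (\<phi> \<xi>) < 1" if "cmod \<xi> < 1" for \<xi>
  proof -
    have "F \<xi> \<in> h ` ball 0 1" using Fin[of \<xi>] that by simp
    then obtain \<zeta> where "\<zeta> \<in> ball 0 1" "F \<xi> = h \<zeta>" by blast
    thus ?thesis by (simp add: \<phi>_def gh)
  qed
  have "cmod (\<phi> z2) \<le> cmod z2"
    by (rule Schwarz_Lemma(1)[OF phol p0 pin]) (use assms in auto)
  moreover obtain \<zeta> where \<zeta>: "\<zeta> \<in> ball 0 1" "F z2 = h \<zeta>" using Fin[of z2] assms by auto
  moreover have "\<phi> z2 = \<zeta>" using \<zeta> by (simp add: \<phi>_def gh)
  moreover have "c * z2 = z1" using False by (simp add: c_def)
  ultimately show ?thesis using \<zeta> by (intro exI[of _ \<zeta>]) (simp add: F_def)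
qed

lemma seg:
  assumes "cmod z1 \<le> \<rho>" "cmod z2 \<le> \<rho>" "\<rho> < 1" "0 \<le> t" "t \<le> 1"
  shows "\<exists>\<zeta>. cmod \<zeta> \<le> \<rho> \<and> h \<zeta> = (1 - of_real t) * h z1 + of_real t * h z2"
proof (cases "cmod z1 \<le> cmod z2")
  case True
  then obtain \<zeta> where "cmod \<zeta> \<le> cmod z2" "h \<zeta> = (1 - of_real t) * h z1 + of_real t * h z2"
    using seg_aux[of z1 z2 t] assms by force
  then show ?thesis using assms by (intro exI[of _ \<zeta>]) auto
next
  case False
  then obtain \<zeta> where "cmod \<zeta> \<le> cmod z1" "h \<zeta> = (1 - of_real (1-t)) * h z2 + of_real (1-t) * h z1"
    using seg_aux[of z2 z1 "1-t"] assms by force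
  then show ?thesis using assms by (intro exI[of _ \<zeta>]) (auto simp: algebra_simps)
qed

lemma openH: "open (h ` ball 0 1)"
  by (rule open_mapping_thm3[OF hol open_ball inj])

lemma hd_nz: "cmod z < 1 \<Longrightarrow> deriv h z \<noteq> 0"
  using gd[of z] by auto

lemma g_deriv: "cmod z < 1 \<Longrightarrow> (g has_field_derivative inverse (deriv h z)) (at (h z))"
proof -
  assume z: "cmod z < 1"
  have "(g has_field_derivative deriv g (h z)) (at (h z))"
    using z by (intro holomorphic_derivI[OF ghol openH]) auto
  moreover have "deriv g (h z) = inverse (deriv h z)"
    using gd[of z] z by (simp add: field_simps hd_nz)
  ultimately show ?thesis by simp
qed

lemma re_sym: "Re (a * cnj b + b * cnj a) = 2 * Re (b * cnj a)"
  by (simp add: algebra_simps)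

lemma re_real: "Re (w * of_real r) = Re w * r"
  by simp

lemma re_sq: "Re (x * cnj x) = (cmod x)^2"
  by (metis Re_complex_of_real complex_norm_square)

lemma ncl:
  assumes z: "cmod z < 1" and w: "cmod w \<le> cmod z"
  shows "Re ((h w - h z) * cnj (z * deriv h z)) \<le> 0"
proof (rule ccontr)
  assume "\<not> ?thesis"
  hence Q: "Re ((h w - h z) * cnj (z * deriv h z)) > 0" by simp
  define d where "d = h w - h z"
  define \<gamma> where "\<gamma> = g \<circ> (\<lambda>t::real. h z + of_real t * d)"
  have p: "((\<lambda>t::real. h z + of_real t * d) has_vector_derivative d) (at 0)"
    by (auto intro!: derivative_eq_intros simp: has_vector_derivative_def scaleR_conv_of_real)
  have gd0: "(g has_field_derivative inverse (deriv h z)) (at ((\<lambda>t::real. h z + of_real t * d) 0))"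
    using g_deriv[OF z] by simp
  have dg: "(\<gamma> has_vector_derivative (d * inverse (deriv h z))) (at 0)"
    unfolding \<gamma>_def by (rule field_vector_diff_chain_at[OF p gd0])
  have g0: "\<gamma> 0 = z" using gh[of z] z by (simp add: \<gamma>_def)
  have "((\<lambda>t. \<gamma> t * cnj (\<gamma> t)) has_vector_derivative
          (\<gamma> 0 * cnj (d * inverse (deriv h z)) + d * inverse (deriv h z) * cnj (\<gamma> 0))) (at 0)"
    by (intro has_vector_derivative_mult dg has_vector_derivative_cnj)
  hence dpsi: "((\<lambda>t. Re (\<gamma> t * cnj (\<gamma> t))) has_real_derivative
          Re (\<gamma> 0 * cnj (d * inverse (deriv h z)) + d * inverse (deriv h z) * cnj (\<gamma> 0))) (at 0)"
    by (simp add: has_vector_derivative_complex_iff)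
  have eqv: "Re (\<gamma> 0 * cnj (d * inverse (deriv h z)) + d * inverse (deriv h z) * cnj (\<gamma> 0))
      = 2 * (Re (d * cnj (z * deriv h z)) * inverse ((cmod (deriv h z))^2))"
  proof -
    have hz: "deriv h z \<noteq> 0" using hd_nz[OF z] .
    have n: "deriv h z * cnj (deriv h z) = of_real ((cmod (deriv h z))^2)"
      by (rule complex_norm_square[symmetric])
    have n2: "of_real (inverse ((cmod (deriv h z))^2)) = inverse (deriv h z * cnj (deriv h z))"
      by (simp only: n of_real_inverse)
    have e1: "d * inverse (deriv h z) * cnj z = (d * cnj (z * deriv h z)) * of_real (inverse ((cmod (deriv h z))^2))"
      unfolding n2 using hz by (simp add: field_simps)
    have "Re (\<gamma> 0 * cnj (d * inverse (deriv h z)) + d * inverse (deriv h z) * cnj (\<gamma> 0))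
        = 2 * Re (d * inverse (deriv h z) * cnj z)"
      unfolding g0 by (rule re_sym)
    also have "\<dots> = 2 * (Re (d * cnj (z * deriv h z)) * inverse ((cmod (deriv h z))^2))"
      unfolding e1 by (simp only: re_real)
    finally show ?thesis .
  qed
  have posv: "0 < 2 * (Re (d * cnj (z * deriv h z)) * inverse ((cmod (deriv h z))^2))"
    using Q hd_nz[OF z] by (simp add: d_def)
  have dpsi2: "((\<lambda>t. Re (\<gamma> t * cnj (\<gamma> t))) has_real_derivative
        2 * (Re (d * cnj (z * deriv h z)) * inverse ((cmod (deriv h z))^2))) (at 0)"
    using dpsi eqv by simp
  obtain e where e: "e > 0" "\<And>s. s > 0 \<Longrightarrow> s < e \<Longrightarrow>
      Re (\<gamma> 0 * cnj (\<gamma> 0)) < Re (\<gamma> (0 + s) * cnj (\<gamma> (0 + s)))"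
    using DERIV_pos_inc_right[OF dpsi2 posv] by blast
  define s where "s = min (e/2) 1"
  have s: "0 < s" "s < e" "s \<le> 1" using e by (auto simp: s_def)
  obtain \<zeta> where \<zeta>: "cmod \<zeta> \<le> cmod z" "h \<zeta> = (1 - of_real s) * h z + of_real s * h w"
    using seg[of z "cmod z" w s] z w s by auto
  have "h z + of_real s * d = h \<zeta>" using \<zeta>(2) by (simp add: d_def algebra_simps)
  hence "\<gamma> s = g (h \<zeta>)" by (simp add: \<gamma>_def)
  also have "\<dots> = \<zeta>" using \<zeta> z by (intro gh) auto
  finally have gs: "\<gamma> s = \<zeta>" .
  have q1: "Re (\<gamma> s * cnj (\<gamma> s)) = (cmod \<zeta>)^2" unfolding gs by (rule re_sq)
  have q2: "Re (\<gamma> 0 * cnj (\<gamma> 0)) = (cmod z)^2" unfolding g0 by (rule re_sq)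
  have "(cmod \<zeta>)^2 \<le> (cmod z)^2" using \<zeta>(1) by (intro power_mono) auto
  hence "Re (\<gamma> s * cnj (\<gamma> s)) \<le> Re (\<gamma> 0 * cnj (\<gamma> 0))" unfolding q1 q2 .
  thus False using e(2)[OF s(1,2)] by simp
qed

lemma h1hol: "deriv h holomorphic_on ball 0 1"
  by (rule holomorphic_deriv[OF hol open_ball])

lemma h2hol: "deriv (deriv h) holomorphic_on ball 0 1"
  by (rule holomorphic_deriv[OF h1hol open_ball])

lemma Rep_nonneg:
  assumes z: "cmod z < 1" "z \<noteq> 0"
  shows "Re (1 + z * deriv (deriv h) z / deriv h z) \<ge> 0"
proof (rule ccontr)
  assume "\<not> ?thesis"
  hence neg: "Re (1 + z * deriv (deriv h) z / deriv h z) < 0" by simp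
  define M where "M = z * deriv h z"
  have hz: "deriv h z \<noteq> 0" using hd_nz z by auto
  have Mnz: "M \<noteq> 0" using hz z by (simp add: M_def)
  define e where "e = (\<lambda>\<theta>::real. z * exp (\<i> * of_real \<theta>))"
  have ne: "cmod (e \<theta>) = cmod z" for \<theta> by (simp add: e_def norm_mult)
  have eb: "e \<theta> \<in> ball 0 1" for \<theta> using ne[of \<theta>] z by simp
  have de: "(e has_vector_derivative (\<i> * e \<theta>)) (at \<theta>)" for \<theta>
  proof -
    have 1: "((\<lambda>\<theta>::real. \<i> * of_real \<theta>) has_vector_derivative \<i>) (at \<theta>)"
      by (auto intro!: derivative_eq_intros simp: has_vector_derivative_def scaleR_conv_of_real)
    have 2: "(exp has_field_derivative exp ((\<lambda>\<theta>::real. \<i> * of_real \<theta>) \<theta>)) (at ((\<lambda>\<theta>::real. \<i> * of_real \<theta>) \<theta>))"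
      by (rule DERIV_exp)
    have "((exp \<circ> (\<lambda>\<theta>::real. \<i> * of_real \<theta>)) has_vector_derivative (\<i> * exp (\<i> * of_real \<theta>))) (at \<theta>)"
      using field_vector_diff_chain_at[OF 1 2] by simp
    hence "((\<lambda>\<theta>. z * (exp \<circ> (\<lambda>\<theta>::real. \<i> * of_real \<theta>)) \<theta>) has_vector_derivative z * (\<i> * exp (\<i> * of_real \<theta>))) (at \<theta>)"
      by (rule has_vector_derivative_mult_right)
    thus ?thesis by (simp add: e_def o_def algebra_simps)
  qed
  have d1: "(deriv h has_field_derivative deriv (deriv h) (e \<theta>)) (at (e \<theta>))" for \<theta>
    using eb by (intro holomorphic_derivI[OF h1hol open_ball])
  have d0: "(h has_field_derivative deriv h (e \<theta>)) (at (e \<theta>))" for \<theta>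
    using eb by (intro holomorphic_derivI[OF hol open_ball])
  define B where "B = (\<lambda>\<theta>. \<i> * e \<theta> * deriv h (e \<theta>))"
  have dA: "((\<lambda>\<theta>. h (e \<theta>) * cnj M) has_vector_derivative (B \<theta> * cnj M)) (at \<theta>)" for \<theta>
  proof -
    have "((h \<circ> e) has_vector_derivative (\<i> * e \<theta> * deriv h (e \<theta>))) (at \<theta>)"
      by (rule field_vector_diff_chain_at[OF de d0])
    thus ?thesis unfolding B_def o_def by (rule has_vector_derivative_mult_left)
  qed
  have dB: "((\<lambda>\<theta>. B \<theta> * cnj M) has_vector_derivative
      (- (e \<theta> * deriv h (e \<theta>) + (e \<theta>)^2 * deriv (deriv h) (e \<theta>)) * cnj M)) (at \<theta>)" for \<theta>
  proof -
    have a: "((deriv h \<circ> e) has_vector_derivative (\<i> * e \<theta> * deriv (deriv h) (e \<theta>))) (at \<theta>)"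
      by (rule field_vector_diff_chain_at[OF de d1])
    have "((\<lambda>\<theta>. e \<theta> * (deriv h \<circ> e) \<theta>) has_vector_derivative
        (e \<theta> * (\<i> * e \<theta> * deriv (deriv h) (e \<theta>)) + \<i> * e \<theta> * (deriv h \<circ> e) \<theta>)) (at \<theta>)"
      by (rule has_vector_derivative_mult[OF de a])
    hence "((\<lambda>\<theta>. \<i> * (e \<theta> * (deriv h \<circ> e) \<theta>)) has_vector_derivative
        \<i> * (e \<theta> * (\<i> * e \<theta> * deriv (deriv h) (e \<theta>)) + \<i> * e \<theta> * (deriv h \<circ> e) \<theta>)) (at \<theta>)"
      by (rule has_vector_derivative_mult_right)
    hence "((\<lambda>\<theta>. \<i> * (e \<theta> * (deriv h \<circ> e) \<theta>) * cnj M) has_vector_derivative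
        \<i> * (e \<theta> * (\<i> * e \<theta> * deriv (deriv h) (e \<theta>)) + \<i> * e \<theta> * (deriv h \<circ> e) \<theta>) * cnj M) (at \<theta>)"
      by (rule has_vector_derivative_mult_left)
    thus ?thesis by (simp add: B_def o_def algebra_simps power2_eq_square)
  qed
  define A where "A = (\<lambda>\<theta>. Re (h (e \<theta>) * cnj M))"
  define A' where "A' = (\<lambda>\<theta>. Re (B \<theta> * cnj M))"
  have DA: "DERIV A \<theta> :> A' \<theta>" for \<theta>
    using dA[of \<theta>] unfolding A_def A'_def by (simp add: has_vector_derivative_complex_iff)
  have DA': "DERIV A' 0 :> Re (- (e 0 * deriv h (e 0) + (e 0)^2 * deriv (deriv h) (e 0)) * cnj M)"
    using dB[of 0] unfolding A'_def by (simp add: has_vector_derivative_complex_iff)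
  have e0: "e 0 = z" by (simp add: e_def)
  have "Re ((M + z^2 * deriv (deriv h) z) * cnj M) = Re (1 + z * deriv (deriv h) z / deriv h z) * (cmod M)^2"
  proof -
    have "(M + z^2 * deriv (deriv h) z) * cnj M = (1 + z * deriv (deriv h) z / deriv h z) * (M * cnj M)"
      using hz by (simp add: M_def field_simps power2_eq_square)
    also have "M * cnj M = of_real ((cmod M)^2)" by (rule complex_norm_square[symmetric])
    finally show ?thesis by (simp only: re_real)
  qed
  also have "\<dots> < 0" using neg Mnz by (simp add: mult_neg_pos)
  finally have neg2: "Re ((M + z^2 * deriv (deriv h) z) * cnj M) < 0" .
  have eqn: "- (e 0 * deriv h (e 0) + (e 0)^2 * deriv (deriv h) (e 0)) * cnj M = - ((M + z^2 * deriv (deriv h) z) * cnj M)"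
    by (simp add: e0 M_def algebra_simps)
  have pos: "0 < Re (- (e 0 * deriv h (e 0) + (e 0)^2 * deriv (deriv h) (e 0)) * cnj M)"
    unfolding eqn uminus_complex.sel(1) using neg2 by linarith
  have A'0: "A' 0 = 0"
  proof -
    have "B 0 * cnj M = \<i> * (M * cnj M)" by (simp add: B_def e0 M_def)
    also have "M * cnj M = of_real ((cmod M)^2)" by (rule complex_norm_square[symmetric])
    finally have "B 0 * cnj M = \<i> * of_real ((cmod M)^2)" .
    then show ?thesis unfolding A'_def by (simp only:) simp
  qed
  obtain d where d: "d > 0" "\<And>s. s > 0 \<Longrightarrow> s < d \<Longrightarrow> A' 0 < A' (0 + s)"
    using DERIV_pos_inc_right[OF DA' pos] by metis
  define s where "s = d / 2"
  have s: "0 < s" "s < d" using d by (auto simp: s_def)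
  obtain \<xi> where \<xi>: "0 < \<xi>" "\<xi> < s" "A s - A 0 = (s - 0) * A' \<xi>"
    using MVT2[of 0 s A A'] s DA by auto
  have "A' \<xi> > 0" using d(2)[of \<xi>] \<xi> s A'0 by simp
  hence "A s > A 0" using \<xi> s by (simp add: algebra_simps mult_pos_pos)
  moreover have "Re ((h (e s) - h z) * cnj (z * deriv h z)) \<le> 0"
    using ncl[of z "e s"] ne z by simp
  ultimately show False by (simp add: A_def e0 M_def algebra_simps)
qed


definition P where "P \<zeta> = 1 + \<zeta> * deriv (deriv h) \<zeta> / deriv h \<zeta>"

lemma ReP: "cmod \<zeta> < 1 \<Longrightarrow> Re (P \<zeta>) \<ge> 0"
  using Rep_nonneg[of \<zeta>] by (cases "\<zeta> = 0") (auto simp: P_def)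

lemma norm_le_of_Re: "Re p \<ge> 0 \<Longrightarrow> cmod (p - 1) \<le> cmod (p + 1)"
proof -
  assume "Re p \<ge> 0"
  hence "(Re p - 1)^2 + (Im p)^2 \<le> (Re p + 1)^2 + (Im p)^2" by (simp add: power2_eq_square algebra_simps)
  hence "sqrt ((Re p - 1)^2 + (Im p)^2) \<le> sqrt ((Re p + 1)^2 + (Im p)^2)" by (rule real_sqrt_le_mono)
  thus ?thesis by (simp add: cmod_def)
qed

lemma P_disk:
  assumes z: "cmod z < 1"
  shows "cmod (P z - 1) \<le> cmod z * cmod (P z + 1)"
proof -
  have Phol: "P holomorphic_on ball 0 1"
    unfolding P_def[abs_def] using hd_nz h1hol h2hol hol by (intro holomorphic_intros) auto
  have nz: "P \<zeta> + 1 \<noteq> 0" if "cmod \<zeta> < 1" for \<zeta>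
  proof
    assume "P \<zeta> + 1 = 0"
    hence "Re (P \<zeta>) = -1" by (metis add_eq_0_iff minus_complex.sel(1) one_complex.sel(1) uminus_complex.sel(1) add.commute diff_0 plus_complex.sel(1) zero_complex.sel(1))
    thus False using ReP[OF that] by simp
  qed
  define \<omega> where "\<omega> = (\<lambda>\<zeta>. (P \<zeta> - 1) / (P \<zeta> + 1))"
  have ohol: "\<omega> holomorphic_on ball 0 1"
    unfolding \<omega>_def using Phol nz by (intro holomorphic_intros) auto
  have o1: "cmod (\<omega> \<zeta>) \<le> 1" if "cmod \<zeta> < 1" for \<zeta>
    using norm_le_of_Re[OF ReP[OF that]] nz[OF that] by (simp add: \<omega>_def norm_divide divide_le_eq_1)
  have o0: "\<omega> 0 = 0" by (simp add: \<omega>_def P_def)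
  have "cmod (\<omega> z) \<le> cmod z"
  proof (rule field_le_mult_one_interval)
    fix s :: real assume s: "0 < s" "s < 1"
    have "cmod ((\<lambda>\<zeta>. of_real s * \<omega> \<zeta>) z) \<le> cmod z"
    proof (rule Schwarz_Lemma(1))
      show "(\<lambda>\<zeta>. of_real s * \<omega> \<zeta>) holomorphic_on ball 0 1" using ohol by (intro holomorphic_intros)
      show "of_real s * \<omega> 0 = 0" using o0 by simp
      show "cmod (of_real s * \<omega> \<zeta>) < 1" if "cmod \<zeta> < 1" for \<zeta>
      proof -
        have "cmod (of_real s * \<omega> \<zeta>) = s * cmod (\<omega> \<zeta>)" using s by (simp add: norm_mult)
        also have "\<dots> \<le> s * 1" using o1[OF that] s by (intro mult_left_mono) auto
        finally show ?thesis using s by simp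
      qed
      show "cmod z < 1" by fact
    qed
    thus "s * cmod (\<omega> z) \<le> cmod z" using s by (simp add: norm_mult)
  qed
  moreover have "P z - 1 = \<omega> z * (P z + 1)" using nz[OF z] by (simp add: \<omega>_def)
  ultimately show ?thesis by (simp add: norm_mult mult_right_mono)
qed

lemma u_alt: "complex_of_real ((1 - (cmod z)^2) / 2) * z * deriv h z = (1 - z * cnj z) * (z * deriv h z) * (1/2)"
proof -
  have e0: "complex_of_real ((1 - (cmod z)^2) / 2) = (1 - of_real ((cmod z)^2)) * (1/2)" by simp
  have e: "complex_of_real ((1 - (cmod z)^2) / 2) = (1 - z * cnj z) * (1/2)"
    unfolding e0 complex_norm_square ..
  show ?thesis unfolding e by (simp add: algebra_simps)
qed

lemma main_inj:
  assumes z1: "cmod z1 < sqrt 2 - 1" and z2: "cmod z2 < sqrt 2 - 1"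
    and eq: "h z1 + complex_of_real ((1 - (cmod z1)^2) / 2) * z1 * deriv h z1
           = h z2 + complex_of_real ((1 - (cmod z2)^2) / 2) * z2 * deriv h z2"
  shows "z1 = z2"
proof -
  define \<rho> where "\<rho> = max (cmod z1) (cmod z2)"
  have r0: "sqrt 2 - 1 < (1::real)"
  proof -
    have "sqrt 2 < sqrt 4" by (rule real_sqrt_less_mono) simp
    thus ?thesis by simp
  qed
  have \<rho>0: "0 \<le> \<rho>" "\<rho> < sqrt 2 - 1" using z1 z2 by (auto simp: \<rho>_def le_max_iff_disj)
  have \<rho>1: "\<rho> < 1" using \<rho>0 r0 by simp
  define k where "k = 1/2 + \<rho> + \<rho>^2/2"
  have k1: "k < 1"
  proof -
    have "(\<rho> + 1)^2 < (sqrt 2)^2" using \<rho>0 by (intro power_strict_mono) auto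
    thus ?thesis by (simp add: k_def power2_eq_square algebra_simps)
  qed
  have z1b: "cmod z1 < 1" and z2b: "cmod z2 < 1" using z1 z2 r0 by auto
  define \<Delta> where "\<Delta> = h z2 - h z1"
  define lp where "lp = (\<lambda>t::real. h z1 + of_real t * \<Delta>)"
  define \<gamma> where "\<gamma> = g \<circ> lp"
  have \<gamma>prop: "cmod (\<gamma> t) \<le> \<rho> \<and> h (\<gamma> t) = lp t" if tt: "0 \<le> t" "t \<le> 1" for t
  proof -
    obtain \<zeta> where \<zeta>: "cmod \<zeta> \<le> \<rho>" "h \<zeta> = (1 - of_real t) * h z1 + of_real t * h z2"
      using seg[OF _ _ \<rho>1 tt, of z1 z2] by (auto simp: \<rho>_def)
    have "lp t = h \<zeta>" using \<zeta> by (simp add: lp_def \<Delta>_def algebra_simps)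
    moreover have "g (h \<zeta>) = \<zeta>" using \<zeta> \<rho>1 by (intro gh) auto
    ultimately show ?thesis using \<zeta> by (simp add: \<gamma>_def)
  qed
  define u where "u = (\<lambda>\<zeta>. h \<zeta> + (1 - \<zeta> * cnj \<zeta>) * (\<zeta> * deriv h \<zeta>) * (1/2))"
  have uu: "h z + complex_of_real ((1 - (cmod z)^2) / 2) * z * deriv h z = u z" for z
    by (simp only: u_def u_alt)
  define D where "D = (\<lambda>t. let c = \<gamma> t; a = deriv h c; b = deriv (deriv h) c; c' = \<Delta> * inverse a in
       c' * a + ((1 - c*cnj c) * (c * (c' * b) + c' * a) + (-(c * cnj c' + c' * cnj c)) * (c * a)) * (1/2))"
  have dF: "((\<lambda>t. u (\<gamma> t)) has_vector_derivative D t) (at t)" if t: "0 \<le> t" "t \<le> 1" for t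
  proof -
    define c where "c = \<gamma> t"
    define a where "a = deriv h c"
    define b where "b = deriv (deriv h) c"
    define c' where "c' = \<Delta> * inverse a"
    have cb: "cmod c < 1" using \<gamma>prop[OF t] \<rho>1 by (simp add: c_def)
    have hc: "h c = lp t" using \<gamma>prop[OF t] by (simp add: c_def)
    have dl: "(lp has_vector_derivative \<Delta>) (at t)"
      unfolding lp_def by (auto intro!: derivative_eq_intros simp: has_vector_derivative_def scaleR_conv_of_real)
    have dg: "(g has_field_derivative inverse a) (at (lp t))"
      using g_deriv[OF cb] hc by (simp add: a_def)
    have dc: "(\<gamma> has_vector_derivative c') (at t)"
      unfolding \<gamma>_def c'_def by (rule field_vector_diff_chain_at[OF dl dg])
    have gt: "\<gamma> t = c" by (simp add: c_def)
    have dh0: "(h has_field_derivative a) (at (\<gamma> t))"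
      using cb unfolding gt a_def by (intro holomorphic_derivI[OF hol open_ball]) auto
    have dh1: "(deriv h has_field_derivative b) (at (\<gamma> t))"
      using cb unfolding gt b_def by (intro holomorphic_derivI[OF h1hol open_ball]) auto
    have d1: "((\<lambda>t. h (\<gamma> t)) has_vector_derivative c' * a) (at t)"
      using field_vector_diff_chain_at[OF dc dh0] by (simp add: o_def)
    have d2: "((\<lambda>t. deriv h (\<gamma> t)) has_vector_derivative c' * b) (at t)"
      using field_vector_diff_chain_at[OF dc dh1] by (simp add: o_def)
    have d3: "((\<lambda>t. cnj (\<gamma> t)) has_vector_derivative cnj c') (at t)"
      by (rule has_vector_derivative_cnj[OF dc])
    have d4: "((\<lambda>t. \<gamma> t * cnj (\<gamma> t)) has_vector_derivative (c * cnj c' + c' * cnj c)) (at t)"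
      using has_vector_derivative_mult[OF dc d3] by (simp add: gt)
    have d5: "((\<lambda>t. 1 - \<gamma> t * cnj (\<gamma> t)) has_vector_derivative (-(c * cnj c' + c' * cnj c))) (at t)"
      using has_vector_derivative_diff[OF has_vector_derivative_const d4] by simp
    have d6: "((\<lambda>t. \<gamma> t * deriv h (\<gamma> t)) has_vector_derivative (c * (c' * b) + c' * a)) (at t)"
      using has_vector_derivative_mult[OF dc d2] by (simp add: gt a_def)
    have d7: "((\<lambda>t. (1 - \<gamma> t * cnj (\<gamma> t)) * (\<gamma> t * deriv h (\<gamma> t))) has_vector_derivative
        ((1 - c*cnj c) * (c * (c' * b) + c' * a) + (-(c * cnj c' + c' * cnj c)) * (c * a))) (at t)"
      using has_vector_derivative_mult[OF d5 d6] by (simp add: gt a_def)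
    have d8: "((\<lambda>t. (1 - \<gamma> t * cnj (\<gamma> t)) * (\<gamma> t * deriv h (\<gamma> t)) * (1/2)) has_vector_derivative
        ((1 - c*cnj c) * (c * (c' * b) + c' * a) + (-(c * cnj c' + c' * cnj c)) * (c * a)) * (1/2)) (at t)"
      by (rule has_vector_derivative_mult_left[OF d7])
    have "((\<lambda>t. u (\<gamma> t)) has_vector_derivative
        c' * a + ((1 - c*cnj c) * (c * (c' * b) + c' * a) + (-(c * cnj c' + c' * cnj c)) * (c * a)) * (1/2)) (at t)"
      unfolding u_def by (rule has_vector_derivative_add[OF d1 d8])
    thus ?thesis by (simp add: D_def Let_def c_def a_def b_def c'_def)
  qed
  have Dbound: "cmod (D t - \<Delta>) \<le> k * cmod \<Delta>" if t: "0 \<le> t" "t \<le> 1" for t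
  proof -
    define c where "c = \<gamma> t"
    define a where "a = deriv h c"
    define b where "b = deriv (deriv h) c"
    have cr: "cmod c \<le> \<rho>" using \<gamma>prop[OF t] by (simp add: c_def)
    have cb: "cmod c < 1" using cr \<rho>1 by simp
    have a0: "a \<noteq> 0" using hd_nz[OF cb] by (simp add: a_def)
    have Pc: "P c = 1 + c * b / a" by (simp add: P_def a_def b_def)
    have e: "D t - \<Delta> = \<Delta> * (((1 - c*cnj c) * P c - c * cnj c) / 2) + (- (c^2 * (a * cnj (inverse a))) / 2) * cnj \<Delta>"
      unfolding Pc D_def Let_def c_def[symmetric] a_def[symmetric] b_def[symmetric]
      by (rule deriv_ident[OF a0 refl])
    have cc: "c * cnj c = of_real ((cmod c)^2)" by (rule complex_norm_square[symmetric])
    have e2: "((1 - c*cnj c) * P c - c * cnj c) / 2 = of_real ((1 - (cmod c)^2)/2) * P c - of_real ((cmod c)^2/2)"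
      unfolding cc by (simp add: field_simps)
    have b1: "cmod (((1 - c*cnj c) * P c - c * cnj c) / 2) \<le> 1/2 + cmod c"
      unfolding e2 by (rule alg_bound[OF norm_ge_zero cb P_disk[OF cb]])
    have b2: "cmod (- (c^2 * (a * cnj (inverse a))) / 2) = (cmod c)^2 / 2"
      using norm_a_cnj_inv[OF a0] by (simp add: norm_mult norm_power norm_divide)
    have "cmod (D t - \<Delta>) \<le> cmod \<Delta> * cmod (((1 - c*cnj c) * P c - c * cnj c) / 2) + (cmod c)^2 / 2 * cmod \<Delta>"
    proof -
      have n1: "cmod (\<Delta> * (((1 - c*cnj c) * P c - c * cnj c) / 2)) = cmod \<Delta> * cmod (((1 - c*cnj c) * P c - c * cnj c) / 2)"
        by (rule norm_mult)
      have n2: "cmod ((- (c^2 * (a * cnj (inverse a))) / 2) * cnj \<Delta>) = (cmod c)^2 / 2 * cmod \<Delta>"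
        by (simp only: norm_mult b2 complex_mod_cnj)
      show ?thesis unfolding e
        using norm_triangle_ineq[of "\<Delta> * (((1 - c*cnj c) * P c - c * cnj c) / 2)" "(- (c^2 * (a * cnj (inverse a))) / 2) * cnj \<Delta>"]
        unfolding n1 n2 .
    qed
    also have "\<dots> \<le> cmod \<Delta> * (1/2 + cmod c) + (cmod c)^2 / 2 * cmod \<Delta>"
      using b1 by (intro add_right_mono mult_left_mono) auto
    also have "\<dots> = (1/2 + cmod c + (cmod c)^2/2) * cmod \<Delta>" by (simp add: algebra_simps)
    also have "\<dots> \<le> k * cmod \<Delta>"
    proof (rule mult_right_mono)
      have "(cmod c)^2 \<le> \<rho>^2" using cr by (intro power_mono) auto
      thus "1/2 + cmod c + (cmod c)^2/2 \<le> k" using cr by (simp add: k_def)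
    qed simp
    finally show ?thesis .
  qed
  define \<Phi> where "\<Phi> = (\<lambda>t. u (\<gamma> t) - of_real t * \<Delta>)"
  have d\<Phi>: "(\<Phi> has_vector_derivative (D t - \<Delta>)) (at t)" if "0 \<le> t" "t \<le> 1" for t
  proof -
    have "((\<lambda>t::real. of_real t * \<Delta>) has_vector_derivative \<Delta>) (at t)"
      by (auto intro!: derivative_eq_intros simp: has_vector_derivative_def scaleR_conv_of_real)
    thus ?thesis unfolding \<Phi>_def by (intro has_vector_derivative_diff dF that)
  qed
  have cont: "continuous_on {0..1} \<Phi>"
    using d\<Phi> by (intro continuous_at_imp_continuous_on ballI has_vector_derivative_continuous) auto
  obtain x where x: "x \<in> {0<..<1}" "cmod (\<Phi> 1 - \<Phi> 0) \<le> cmod ((1 - 0) *\<^sub>R (D x - \<Delta>))"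
    using mvt_general[of 0 1 \<Phi> "\<lambda>t s. s *\<^sub>R (D t - \<Delta>)"] cont d\<Phi>
    unfolding has_vector_derivative_def by force
  have "\<gamma> 0 = z1" using gh[of z1] z1b by (simp add: \<gamma>_def lp_def)
  moreover have "\<gamma> 1 = z2" using gh[of z2] z2b by (simp add: \<gamma>_def lp_def \<Delta>_def)
  ultimately have "\<Phi> 1 - \<Phi> 0 = - \<Delta>" using eq by (simp add: \<Phi>_def uu[symmetric])
  hence "cmod \<Delta> \<le> k * cmod \<Delta>" using x Dbound[of x] by simp
  hence "cmod \<Delta> = 0"
  proof (rule contrapos_pp)
    assume "cmod \<Delta> \<noteq> 0"
    hence "cmod \<Delta> > 0" by simp
    hence "k * cmod \<Delta> < 1 * cmod \<Delta>" using k1 by (intro mult_strict_right_mono)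
    thus "\<not> cmod \<Delta> \<le> k * cmod \<Delta>" by simp
  qed
  hence "h z1 = h z2" by (simp add: \<Delta>_def)
  thus ?thesis using inj z1b z2b by (auto simp: inj_on_def)
qed


end

theorem corollary2:
  fixes h :: "complex \<Rightarrow> complex"
  assumes "convex_univalent h"
  shows "inj_on (\<lambda>z. h z + complex_of_real ((1 - (cmod z)^2) / 2) * z * deriv h z)
                (ball 0 (sqrt 2 - 1))"
proof -
  have hol: "h holomorphic_on ball 0 1" and inj: "inj_on h (ball 0 1)" and cv: "convex (h ` ball 0 1)"
    using assms by (auto simp: convex_univalent_def)
  obtain g where g: "g holomorphic_on (h ` ball 0 1)"
      "\<And>z. z \<in> ball 0 1 \<Longrightarrow> deriv h z * deriv g (h z) = 1"
      "\<And>z. z \<in> ball 0 1 \<Longrightarrow> g (h z) = z"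
    using holomorphic_has_inverse[OF hol open_ball inj] by blast
  interpret cvx h g
    using hol inj cv g by unfold_locales auto
  show ?thesis
    by (rule inj_onI) (rule main_inj, auto)
qed

end
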